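(* Let $\mathcal{D}\subseteq\mathbb{R}^n$, let $f_{\mathrm{cl}}:\mathcal{D}\to\mathbb{R}^n$ be locally Lipschitz, and let $h:\mathcal{D}\to\mathbb{R}$ be locally Lipschitz with $h(\mathcal{D})\subseteq[h_{\min},h_{\max}]$ for some constants $h_{\min}<0<h_{\max}$. Let $S=\{x\in\mathcal{D}: h(x)\ge 0\}$. For a function $\alpha:\mathbb{R}\to\mathbb{R}$, say that the barrier condition holds with $\alpha$ if $$\sup_{\zeta\in\partial^C h(x)}\zeta^\top f_{\mathrm{cl}}(x)\;\ge\;-\alpha\big(h(x)\big)\qquad\text{for all }x\in\mathcal{D}.$$ Then the following are equivalent: (a) There exists an extended class-$\mathcal{K}_\infty$ function $\alpha$ satisfying the one-sided slope bounds $$\limsup_{s\downarrow 0}\frac{\alpha(s)}{s}<\infty,\qquad \liminf_{s\uparrow 0}\frac{\alpha(s)}{s}>0,$$ such that the barrier condition holds with $\alpha$. (b) There exist constants $0<\alpha_1\le\alpha_m<\infty$ such that the barrier condition holds with the Leaky-ReLU function $$\overline{\alpha}(s)=\begin{cases}\alpha_m s,& s\ge 0,\\ \alpha_1 s,& s<0.\end{cases}$$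
   Context: $\partial^C h(x)$ denotes the Clarke generalized gradient of $h$ at $x$ (which reduces to $\{\nabla h(x)\}$ where $h$ is continuously differentiable). An extended class-$\mathcal{K}_\infty$ function is a continuous, strictly increasing function $\alpha:\mathbb{R}\to\mathbb{R}$ with $\alpha(0)=0$ and $\alpha(s)\to\pm\infty$ as $s\to\pm\infty$. *)

theory Defs
  imports "HOL-Analysis.Analysis"
begin

definition locally_lipschitz_on :: "('a::metric_space) set \<Rightarrow> ('a \<Rightarrow> 'b::metric_space) \<Rightarrow> bool" where
  "locally_lipschitz_on D f \<longleftrightarrow>
     (\<forall>x\<in>D. \<exists>U. open U \<and> x \<in> U \<and> (\<exists>L. L-lipschitz_on (U \<inter> D) f))"

definition clarke_dir_deriv ::
  "(real^'n) set \<Rightarrow> (real^'n \<Rightarrow> real) \<Rightarrow> real^'n \<Rightarrow> real^'n \<Rightarrow> ereal" where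
  "clarke_dir_deriv D h x v =
     Limsup (at (x, 0) within {(y, t). y \<in> D \<and> 0 < t \<and> y + t *\<^sub>R v \<in> D})
            (\<lambda>(y, t). ereal ((h (y + t *\<^sub>R v) - h y) / t))"

definition clarke_grad :: "(real^'n) set \<Rightarrow> (real^'n \<Rightarrow> real) \<Rightarrow> real^'n \<Rightarrow> (real^'n) set" where
  "clarke_grad D h x = {\<zeta>. \<forall>v. ereal (\<zeta> \<bullet> v) \<le> clarke_dir_deriv D h x v}"

definition ext_class_K_inf :: "(real \<Rightarrow> real) \<Rightarrow> bool" where
  "ext_class_K_inf \<alpha> \<longleftrightarrow> continuous_on UNIV \<alpha> \<and> strict_mono \<alpha> \<and> \<alpha> 0 = 0 \<and>
     filterlim \<alpha> at_top at_top \<and> filterlim \<alpha> at_bot at_bot"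

definition barrier_condition ::
  "(real^'n) set \<Rightarrow> (real^'n \<Rightarrow> real^'n) \<Rightarrow> (real^'n \<Rightarrow> real) \<Rightarrow> (real \<Rightarrow> real) \<Rightarrow> bool" where
  "barrier_condition D f h \<alpha> \<longleftrightarrow>
     (\<forall>x\<in>D. (SUP \<zeta>\<in>clarke_grad D h x. ereal (\<zeta> \<bullet> f x)) \<ge> ereal (- \<alpha> (h x)))"

definition leaky_relu :: "real \<Rightarrow> real \<Rightarrow> real \<Rightarrow> real" where
  "leaky_relu a1 am s = (if s \<ge> 0 then am * s else a1 * s)"

end

theory Submission
  imports Defs
begin

lemma leaky_props:
  fixes a1 am :: real
  assumes a1: "0 < a1" and am: "a1 \<le> am"
  shows "ext_class_K_inf (leaky_relu a1 am)
             \<and> Limsup (at_right 0) (\<lambda>s. ereal (leaky_relu a1 am s / s)) < \<infinity>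
             \<and> Liminf (at_left 0) (\<lambda>s. ereal (leaky_relu a1 am s / s)) > 0"
proof -
  have eq: "leaky_relu a1 am = (\<lambda>s. am * max s 0 + a1 * min s 0)"
    by (auto simp: leaky_relu_def fun_eq_iff max_def min_def)
  have cont: "continuous_on UNIV (leaky_relu a1 am)"
    unfolding eq by (intro continuous_intros)
  have sm: "strict_mono (leaky_relu a1 am)"
  proof (rule strict_monoI)
    fix x y :: real assume "x < y"
    then show "leaky_relu a1 am x < leaky_relu a1 am y"
      using a1 am unfolding leaky_relu_def
      by (auto intro: mult_strict_left_mono) (smt (verit, best) mult_less_cancel_left_pos mult_right_mono)
  qed
  have top1: "filterlim (\<lambda>s::real. a1 * s) at_top at_top"
    by (rule filterlim_tendsto_pos_mult_at_top[OF tendsto_const a1 filterlim_ident])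
  have top: "filterlim (leaky_relu a1 am) at_top at_top"
  proof (rule filterlim_at_top_mono[OF top1])
    show "\<forall>\<^sub>F x in at_top. a1 * x \<le> leaky_relu a1 am x"
      using eventually_ge_at_top[of "0::real"]
      by eventually_elim (use am in \<open>auto simp: leaky_relu_def intro: mult_right_mono\<close>)
  qed
  have bot1: "filterlim (\<lambda>s::real. a1 * s) at_bot at_bot"
    by (rule filterlim_tendsto_pos_mult_at_bot[OF tendsto_const a1 filterlim_ident])
  have bot: "filterlim (leaky_relu a1 am) at_bot at_bot"
  proof (rule filterlim_cong[THEN iffD1, OF refl refl _ bot1])
    show "\<forall>\<^sub>F x in at_bot. a1 * x = leaky_relu a1 am x"
      using eventually_le_at_bot[of "-1::real"]
      by eventually_elim (auto simp: leaky_relu_def)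
  qed
  have ls: "Limsup (at_right 0) (\<lambda>s. ereal (leaky_relu a1 am s / s)) \<le> ereal am"
    by (rule Limsup_bounded) (auto simp: eventually_at_right_field leaky_relu_def intro!: exI[of _ 1])
  have li: "ereal a1 \<le> Liminf (at_left 0) (\<lambda>s. ereal (leaky_relu a1 am s / s))"
    by (rule Liminf_bounded) (auto simp: eventually_at_left_field leaky_relu_def intro!: exI[of _ "-1"])
  show ?thesis
    using cont sm top bot ls li a1
    unfolding ext_class_K_inf_def
    by (auto simp: leaky_relu_def order_le_less_trans intro: order.strict_trans2[of 0 "ereal a1"])
qed

theorem theorem1:
  fixes D :: "(real^'n) set"
    and f_cl :: "real^'n \<Rightarrow> real^'n"
    and h :: "real^'n \<Rightarrow> real"
    and h_min h_max :: real
  assumes "locally_lipschitz_on D f_cl"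
    and "locally_lipschitz_on D h"
    and "h_min < 0" and "0 < h_max"
    and "h ` D \<subseteq> {h_min..h_max}"
  shows "(\<exists>\<alpha>. ext_class_K_inf \<alpha>
             \<and> Limsup (at_right 0) (\<lambda>s. ereal (\<alpha> s / s)) < \<infinity>
             \<and> Liminf (at_left 0) (\<lambda>s. ereal (\<alpha> s / s)) > 0
             \<and> barrier_condition D f_cl h \<alpha>)
     \<longleftrightarrow> (\<exists>\<alpha>1 \<alpha>m. 0 < \<alpha>1 \<and> \<alpha>1 \<le> \<alpha>m
             \<and> barrier_condition D f_cl h (leaky_relu \<alpha>1 \<alpha>m))"
proof
  assume "\<exists>\<alpha>1 \<alpha>m. 0 < \<alpha>1 \<and> \<alpha>1 \<le> \<alpha>m
             \<and> barrier_condition D f_cl h (leaky_relu \<alpha>1 \<alpha>m)"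
  then obtain a1 am where "0 < a1" "a1 \<le> am" "barrier_condition D f_cl h (leaky_relu a1 am)"
    by blast
  then show "\<exists>\<alpha>. ext_class_K_inf \<alpha>
             \<and> Limsup (at_right 0) (\<lambda>s. ereal (\<alpha> s / s)) < \<infinity>
             \<and> Liminf (at_left 0) (\<lambda>s. ereal (\<alpha> s / s)) > 0
             \<and> barrier_condition D f_cl h \<alpha>"
    using leaky_props by blast
next
  assume "\<exists>\<alpha>. ext_class_K_inf \<alpha>
             \<and> Limsup (at_right 0) (\<lambda>s. ereal (\<alpha> s / s)) < \<infinity>
             \<and> Liminf (at_left 0) (\<lambda>s. ereal (\<alpha> s / s)) > 0
             \<and> barrier_condition D f_cl h \<alpha>"
  then obtain \<alpha> where K: "ext_class_K_inf \<alpha>"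
    and LS: "Limsup (at_right 0) (\<lambda>s. ereal (\<alpha> s / s)) < \<infinity>"
    and LI: "Liminf (at_left 0) (\<lambda>s. ereal (\<alpha> s / s)) > 0"
    and B: "barrier_condition D f_cl h \<alpha>" by blast
  have sm: "strict_mono \<alpha>" and a0: "\<alpha> 0 = 0" using K by (auto simp: ext_class_K_inf_def)
  have mono: "\<alpha> x \<le> \<alpha> y" if "x \<le> y" for x y
    using sm that by (metis order_le_less strict_mono_less_eq)
  obtain M where M: "Limsup (at_right 0) (\<lambda>s. ereal (\<alpha> s / s)) < ereal M"
    using ereal_dense2[OF LS] by blast
  obtain c where c0: "0 < ereal c" and c: "ereal c < Liminf (at_left 0) (\<lambda>s. ereal (\<alpha> s / s))"
    using ereal_dense2[OF LI] by blast
  have cpos: "0 < c" using c0 by simp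
  obtain b where b: "b > 0" and bM: "\<And>s. 0 < s \<Longrightarrow> s < b \<Longrightarrow> \<alpha> s / s < M"
    using Limsup_lessD[OF M] unfolding eventually_at_right_field by auto
  obtain b' where b': "b' < 0" and bc: "\<And>s. b' < s \<Longrightarrow> s < 0 \<Longrightarrow> \<alpha> s / s > c"
    using less_LiminfD[OF c] unfolding eventually_at_left_field by auto
  define a1 where "a1 = min c (\<alpha> b' / h_min)"
  define am where "am = max (max M (\<alpha> h_max / b)) a1"
  have ab'neg: "\<alpha> b' < 0" using sm b' a0 by (metis strict_mono_less)
  have a1pos: "0 < a1" unfolding a1_def using cpos ab'neg assms(3) by (simp add: divide_neg_neg)
  have a1am: "a1 \<le> am" unfolding am_def by simp
  have key: "\<alpha> s \<le> leaky_relu a1 am s" if "h_min \<le> s" "s \<le> h_max" for s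
  proof (cases "s \<ge> 0")
    case True
    show ?thesis
    proof (cases "s = 0")
      case True then show ?thesis using a0 by (simp add: leaky_relu_def)
    next
      case False
      then have sp: "s > 0" using True by simp
      show ?thesis
      proof (cases "s < b")
        case True
        have "\<alpha> s / s < M" using bM sp True by blast
        then have "\<alpha> s < M * s" using sp by (simp add: divide_less_eq)
        also have "M * s \<le> am * s" unfolding am_def using sp by (intro mult_right_mono) auto
        finally show ?thesis using sp by (simp add: leaky_relu_def)
      next
        case False
        have h0: "0 \<le> \<alpha> h_max" using mono[of 0 h_max] assms(4) a0 by simp
        have "\<alpha> s \<le> \<alpha> h_max" using mono that by simp
        also have "\<alpha> h_max \<le> (\<alpha> h_max / b) * s"
        proof -
          have "\<alpha> h_max / b * s = \<alpha> h_max * (s / b)" by simp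
          moreover have "s / b \<ge> 1" using False b by simp
          ultimately show ?thesis using h0 by (metis mult_left_mono mult.right_neutral)
        qed
        also have "(\<alpha> h_max / b) * s \<le> am * s" unfolding am_def using sp by (intro mult_right_mono) auto
        finally show ?thesis using sp by (simp add: leaky_relu_def)
      qed
    qed
  next
    case False
    then have sn: "s < 0" by simp
    show ?thesis
    proof (cases "b' < s")
      case True
      have "\<alpha> s / s > c" using bc True sn by blast
      then have "\<alpha> s < c * s" using sn by (simp add: less_divide_eq)
      also have "c * s \<le> a1 * s" unfolding a1_def using sn by (intro mult_right_mono_neg) auto
      finally show ?thesis using sn by (simp add: leaky_relu_def)
    next
      case False
      have "\<alpha> s \<le> \<alpha> b'" using mono False by simp
      also have "\<alpha> b' = (\<alpha> b' / h_min) * h_min" using assms(3) by simp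
      also have "\<dots> \<le> a1 * h_min" unfolding a1_def using assms(3) by (intro mult_right_mono_neg) auto
      also have "a1 * h_min \<le> a1 * s" using a1pos that by simp
      finally show ?thesis using sn by (simp add: leaky_relu_def)
    qed
  qed
  have "barrier_condition D f_cl h (leaky_relu a1 am)"
    unfolding barrier_condition_def
  proof
    fix x assume x: "x \<in> D"
    then have hx: "h_min \<le> h x" "h x \<le> h_max" using assms(5) by auto
    have "ereal (- leaky_relu a1 am (h x)) \<le> ereal (- \<alpha> (h x))" using key[OF hx] by simp
    also have "\<dots> \<le> (SUP \<zeta>\<in>clarke_grad D h x. ereal (\<zeta> \<bullet> f_cl x))"
      using B x unfolding barrier_condition_def by blast
    finally show "ereal (- leaky_relu a1 am (h x)) \<le> (SUP \<zeta>\<in>clarke_grad D h x. ereal (\<zeta> \<bullet> f_cl x))" .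
  qed
  then show "\<exists>\<alpha>1 \<alpha>m. 0 < \<alpha>1 \<and> \<alpha>1 \<le> \<alpha>m \<and> barrier_condition D f_cl h (leaky_relu \<alpha>1 \<alpha>m)"
    using a1pos a1am by blast
qed

end
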